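(* Let $D\subset\mathbb R^d$ be a domain, $V=H_0^1(D)$, $\mathcal V=L_2(Y,V,\sigma)$, and let $B\colon\mathcal V\to\mathcal V'$ be given by $\langle Bv,w\rangle=\sum_{\nu\in\mathcal F}\sum_{\nu'\in\mathcal F}\int_D[a]_{\nu\nu'}\nabla[v]_{\nu'}\cdot\nabla[w]_\nu\,dx$ with functions $[a]_{\nu\nu'}\in L_\infty(D)$ satisfying $[a]_{\nu\nu'}=[a]_{\nu'\nu}$. Then $\|B\|_{\mathcal V\to\mathcal V'}\le\max_{\nu\in\mathcal F}\Bigl\|\sum_{\nu'\in\mathcal F}|[a]_{\nu\nu'}|\Bigr\|_{L_\infty(D)}.$
   Context: $Y=[-1,1]^{\mathcal M}$ for a countable index set $\mathcal M$, $\sigma$ the uniform product probability measure on $Y$, $\mathcal F=\{\nu\in\mathbb N_0^{\mathcal M}:\#\operatorname{supp}\nu<\infty\}$, $L_\nu(y)=\prod_\mu L_{\nu_\mu}(y_\mu)$ with $L_k$ the Legendre polynomials orthonormal w.r.t. $dy/2$ on $[-1,1]$, and $[v]_\nu=\int_Y v(y)L_\nu(y)\,d\sigma(y)$. The norm on $\mathcal V$ is $\|v\|_{\mathcal V}^2=\sum_\nu\|\nabla[v]_\nu\|_{L_2(D)}^2$. *)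

theory Defs
  imports "HOL-Analysis.Analysis"
begin

fun dderiv :: "'d::euclidean_space list \<Rightarrow> ('d \<Rightarrow> real) \<Rightarrow> 'd \<Rightarrow> real" where
  "dderiv [] f = f"
| "dderiv (e # es) f = (\<lambda>x. frechet_derivative (dderiv es f) (at x) e)"

definition smooth :: "('d::euclidean_space \<Rightarrow> real) \<Rightarrow> bool" where
  "smooth f \<longleftrightarrow> (\<forall>es. (\<forall>x. dderiv es f differentiable at x) \<and> continuous_on UNIV (dderiv es f))"

definition test_fun :: "'d::euclidean_space set \<Rightarrow> ('d \<Rightarrow> real) \<Rightarrow> bool" where
  "test_fun D \<phi> \<longleftrightarrow> smooth \<phi> \<and> compact (closure {x. \<phi> x \<noteq> 0}) \<and> closure {x. \<phi> x \<noteq> 0} \<subseteq> D"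

definition grad :: "('d::euclidean_space \<Rightarrow> real) \<Rightarrow> 'd \<Rightarrow> 'd" where
  "grad f x = (\<Sum>b\<in>Basis. frechet_derivative f (at x) b *\<^sub>R b)"

definition sqint :: "'d::euclidean_space set \<Rightarrow> ('d \<Rightarrow> 'b::euclidean_space) \<Rightarrow> bool" where
  "sqint D f \<longleftrightarrow> f \<in> borel_measurable (lebesgue_on D) \<and> integrable (lebesgue_on D) (\<lambda>x. (norm (f x))\<^sup>2)"

text \<open>u \<in> H_0^1(D) with (weak) gradient g: u, g square integrable on D and
  (u, g) is the H^1-limit of (phi_n, grad phi_n) for test functions phi_n.\<close>
definition H01 :: "'d::euclidean_space set \<Rightarrow> ('d \<Rightarrow> real) \<Rightarrow> ('d \<Rightarrow> 'd) \<Rightarrow> bool" where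
  "H01 D u g \<longleftrightarrow> sqint D u \<and> sqint D g \<and>
     (\<exists>\<phi>::nat \<Rightarrow> 'd \<Rightarrow> real. (\<forall>n. test_fun D (\<phi> n)) \<and>
        (\<lambda>n. integral\<^sup>L (lebesgue_on D) (\<lambda>x. (\<phi> n x - u x)\<^sup>2)) \<longlonglongrightarrow> 0 \<and>
        (\<lambda>n. integral\<^sup>L (lebesgue_on D) (\<lambda>x. (norm (grad (\<phi> n) x - g x))\<^sup>2)) \<longlonglongrightarrow> 0)"

definition FF :: "('m \<Rightarrow> nat) set" where
  "FF = {\<nu>. finite {\<mu>. \<nu> \<mu> \<noteq> 0}}"

text \<open>An element of the Bochner space, represented by its Legendre coefficients
  [v]_nu \<in> H_0^1(D) (with gradients), square summable in the V-norm.\<close>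
definition inVV :: "'d::euclidean_space set \<Rightarrow> (('m \<Rightarrow> nat) \<Rightarrow> 'd \<Rightarrow> real) \<Rightarrow> (('m \<Rightarrow> nat) \<Rightarrow> 'd \<Rightarrow> 'd) \<Rightarrow> bool" where
  "inVV D u g \<longleftrightarrow> (\<forall>\<nu>\<in>FF. H01 D (u \<nu>) (g \<nu>)) \<and>
     (\<lambda>\<nu>. integral\<^sup>L (lebesgue_on D) (\<lambda>x. (norm (g \<nu> x))\<^sup>2)) summable_on FF"

definition VVnorm :: "'d::euclidean_space set \<Rightarrow> (('m \<Rightarrow> nat) \<Rightarrow> 'd \<Rightarrow> 'd) \<Rightarrow> real" where
  "VVnorm D g = sqrt (\<Sum>\<^sub>\<infinity>\<nu>\<in>FF. integral\<^sup>L (lebesgue_on D) (\<lambda>x. (norm (g \<nu> x))\<^sup>2))"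

definition Bform :: "'d::euclidean_space set \<Rightarrow> (('m \<Rightarrow> nat) \<Rightarrow> ('m \<Rightarrow> nat) \<Rightarrow> 'd \<Rightarrow> real)
    \<Rightarrow> (('m \<Rightarrow> nat) \<Rightarrow> 'd \<Rightarrow> 'd) \<Rightarrow> (('m \<Rightarrow> nat) \<Rightarrow> 'd \<Rightarrow> 'd) \<Rightarrow> real" where
  "Bform D a gv gw = (\<Sum>\<^sub>\<infinity>\<nu>\<in>FF. \<Sum>\<^sub>\<infinity>\<nu>'\<in>FF.
      integral\<^sup>L (lebesgue_on D) (\<lambda>x. a \<nu> \<nu>' x * (gv \<nu>' x \<bullet> gw \<nu> x)))"

definition Linf :: "'d::euclidean_space set \<Rightarrow> ('d \<Rightarrow> real) \<Rightarrow> bool" where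
  "Linf D f \<longleftrightarrow> f \<in> borel_measurable (lebesgue_on D) \<and> (\<exists>C. AE x in lebesgue_on D. \<bar>f x\<bar> \<le> C)"

end

theory Submission
  imports Defs
begin


lemma countable_FF: "countable (FF :: ('m::countable \<Rightarrow> nat) set)"
proof -
  let ?g = "\<lambda>\<nu>::'m\<Rightarrow>nat. {(\<mu>, \<nu> \<mu>) | \<mu>. \<nu> \<mu> \<noteq> 0}"
  have "inj_on ?g FF"
  proof (rule inj_onI)
    fix x y :: "'m \<Rightarrow> nat" assume "?g x = ?g y"
    then have "\<And>\<mu> n. ((\<mu>, n) \<in> ?g x) = ((\<mu>, n) \<in> ?g y)" by simp
    then have "\<And>\<mu>. x \<mu> = y \<mu>"
      by (simp) (metis neq0_conv)
    then show "x = y" by auto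
  qed
  moreover have "?g ` FF \<subseteq> Collect finite"
  proof
    fix S assume "S \<in> ?g ` FF"
    then obtain \<nu> where \<nu>: "\<nu> \<in> FF" "S = ?g \<nu>" by auto
    have "S = (\<lambda>\<mu>. (\<mu>, \<nu> \<mu>)) ` {\<mu>. \<nu> \<mu> \<noteq> 0}" using \<nu> by auto
    then show "S \<in> Collect finite" using \<nu> by (simp add: FF_def)
  qed
  ultimately show ?thesis
    by (meson countable_Collect_finite countable_image_inj_on countable_subset)
qed

lemma bridge1:
  fixes g :: "'i \<Rightarrow> real"
  assumes "g summable_on A" "\<And>x. x\<in>A \<Longrightarrow> g x \<ge> 0"
  shows "(\<integral>\<^sup>+x. ennreal (g x) \<partial>count_space A) = ennreal (infsum g A)"
proof -
  have "(\<lambda>x. norm (g x)) summable_on A"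
    using assms by (subst summable_on_cong[where g=g]) auto
  then have "Infinite_Set_Sum.abs_summable_on g A"
    using abs_summable_equivalent by blast
  then show ?thesis
    using assms by (simp add: nn_integral_conv_infsetsum infsetsum_infsum)
qed

lemma bridge2:
  fixes g :: "'i \<Rightarrow> real"
  assumes "(\<integral>\<^sup>+x. ennreal (norm (g x)) \<partial>count_space A) \<noteq> \<infinity>"
  shows "(\<lambda>x. norm (g x)) summable_on A"
proof -
  have "integrable (count_space A) g"
    using assms by (intro integrableI_bounded) (auto simp: top.not_eq_extremum)
  then have "Infinite_Set_Sum.abs_summable_on g A"
    by (simp add: Infinite_Set_Sum.abs_summable_on_def)
  then show ?thesis using abs_summable_equivalent by blast
qed

lemma bridge3:
  fixes g :: "'i \<Rightarrow> real"
  assumes "(\<Sum>\<^sub>\<infinity>x\<in>A. ennreal (g x)) \<le> ennreal M" "\<And>x. x\<in>A \<Longrightarrow> g x \<ge> 0" "0 \<le> M"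
  shows "(\<integral>\<^sup>+x. ennreal (g x) \<partial>count_space A) \<le> ennreal M"
proof -
  have fs: "sum g F \<le> M" if "finite F" "F \<subseteq> A" for F
  proof -
    have "ennreal (sum g F) = sum (\<lambda>x. ennreal (g x)) F"
      using that assms(2) by (subst sum_ennreal[symmetric]) auto
    also have "\<dots> \<le> (\<Sum>\<^sub>\<infinity>x\<in>A. ennreal (g x))"
      using that by (subst nonneg_infsum_complete) (auto intro!: SUP_upper)
    also have "\<dots> \<le> ennreal M" by (rule assms(1))
    finally show ?thesis using assms(3) by (simp add: ennreal_le_iff)
  qed
  have sg: "g summable_on A"
    using assms(2) fs by (intro nonneg_bdd_above_summable_on) (auto simp: bdd_above_def)
  have "infsum g A \<le> M" using sg fs by (rule infsum_le_finite_sums)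
  then show ?thesis using bridge1[OF sg assms(2)] by (simp add: ennreal_leI)
qed

lemma ennreal_abs_integral_le:
  fixes f :: "'a \<Rightarrow> real"
  shows "ennreal \<bar>integral\<^sup>L M f\<bar> \<le> (\<integral>\<^sup>+x. ennreal \<bar>f x\<bar> \<partial>M)"
proof (cases "integrable M f")
  case True
  then show ?thesis using integral_norm_bound_ennreal[OF True] by simp
next
  case False
  then show ?thesis by (simp add: not_integrable_integral_eq)
qed



lemma Gbound:
  fixes \<alpha> :: "'i \<Rightarrow> 'i \<Rightarrow> 'a \<Rightarrow> real" and \<phi> :: "'i \<Rightarrow> 'a \<Rightarrow> real"
  assumes I: "countable I"
    and ann: "\<And>i j x. 0 \<le> \<alpha> i j x"
    and am: "\<And>i j. i\<in>I \<Longrightarrow> j\<in>I \<Longrightarrow> \<alpha> i j \<in> borel_measurable N"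
    and pm: "\<And>i. i\<in>I \<Longrightarrow> \<phi> i \<in> borel_measurable N"
    and ae: "\<And>i. i\<in>I \<Longrightarrow> AE x in N. (\<integral>\<^sup>+j. ennreal (\<alpha> i j x) \<partial>count_space I) \<le> ennreal M"
  shows "(\<integral>\<^sup>+i. \<integral>\<^sup>+j. \<integral>\<^sup>+x. ennreal (\<alpha> i j x * (\<phi> i x)\<^sup>2) \<partial>N \<partial>count_space I \<partial>count_space I)
      \<le> ennreal M * (\<integral>\<^sup>+i. \<integral>\<^sup>+x. ennreal ((\<phi> i x)\<^sup>2) \<partial>N \<partial>count_space I)"
proof -
  have inner: "(\<integral>\<^sup>+j. \<integral>\<^sup>+x. ennreal (\<alpha> i j x * (\<phi> i x)\<^sup>2) \<partial>N \<partial>count_space I)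
      \<le> ennreal M * (\<integral>\<^sup>+x. ennreal ((\<phi> i x)\<^sup>2) \<partial>N)" if i: "i \<in> I" for i
  proof -
    have "(\<integral>\<^sup>+j. \<integral>\<^sup>+x. ennreal (\<alpha> i j x * (\<phi> i x)\<^sup>2) \<partial>N \<partial>count_space I)
        = (\<integral>\<^sup>+x. \<integral>\<^sup>+j. ennreal (\<alpha> i j x * (\<phi> i x)\<^sup>2) \<partial>count_space I \<partial>N)"
      using I am pm i by (intro nn_integral_count_space_nn_integral[symmetric]) auto
    also have "\<dots> = (\<integral>\<^sup>+x. (\<integral>\<^sup>+j. ennreal (\<alpha> i j x) \<partial>count_space I) * ennreal ((\<phi> i x)\<^sup>2) \<partial>N)"
      by (intro nn_integral_cong, subst nn_integral_multc[symmetric])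
         (auto simp: ennreal_mult ann)
    also have "\<dots> \<le> (\<integral>\<^sup>+x. ennreal M * ennreal ((\<phi> i x)\<^sup>2) \<partial>N)"
      using ae[OF i] by (intro nn_integral_mono_AE) (auto elim!: eventually_mono intro: mult_right_mono)
    also have "\<dots> = ennreal M * (\<integral>\<^sup>+x. ennreal ((\<phi> i x)\<^sup>2) \<partial>N)"
      using pm[OF i] by (intro nn_integral_cmult) auto
    finally show ?thesis .
  qed
  have "(\<integral>\<^sup>+i. \<integral>\<^sup>+j. \<integral>\<^sup>+x. ennreal (\<alpha> i j x * (\<phi> i x)\<^sup>2) \<partial>N \<partial>count_space I \<partial>count_space I)
     \<le> (\<integral>\<^sup>+i. ennreal M * (\<integral>\<^sup>+x. ennreal ((\<phi> i x)\<^sup>2) \<partial>N) \<partial>count_space I)"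
    using inner by (intro nn_integral_mono) auto
  also have "\<dots> = ennreal M * (\<integral>\<^sup>+i. \<integral>\<^sup>+x. ennreal ((\<phi> i x)\<^sup>2) \<partial>N \<partial>count_space I)"
    by (intro nn_integral_cmult) auto
  finally show ?thesis .
qed



lemma amgm_pt:
  fixes t al f h :: real
  assumes "t > 0" "al \<ge> 0"
  shows "al * f * h \<le> t/2 * (al * f\<^sup>2) + 1/(2*t) * (al * h\<^sup>2)"
proof -
  have "0 \<le> (t*f - h)\<^sup>2" by simp
  then have "2*t*(f*h) \<le> t\<^sup>2 * f\<^sup>2 + h\<^sup>2" by (simp add: power2_eq_square algebra_simps)
  then have "f*h \<le> t/2 * f\<^sup>2 + 1/(2*t) * h\<^sup>2" using assms(1)
    by (simp add: field_simps power2_eq_square)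
  then have "al * (f*h) \<le> al * (t/2 * f\<^sup>2 + 1/(2*t) * h\<^sup>2)"
    using assms(2) by (simp add: mult_left_mono)
  then show ?thesis by (simp add: algebra_simps)
qed

lemma mainE:
  fixes \<alpha> :: "'i \<Rightarrow> 'i \<Rightarrow> 'a \<Rightarrow> real" and f h :: "'i \<Rightarrow> 'a \<Rightarrow> real"
  assumes I: "countable I"
    and ann: "\<And>i j x. 0 \<le> \<alpha> i j x"
    and sym: "\<And>i j. i\<in>I \<Longrightarrow> j\<in>I \<Longrightarrow> \<alpha> i j = \<alpha> j i"
    and am: "\<And>i j. i\<in>I \<Longrightarrow> j\<in>I \<Longrightarrow> \<alpha> i j \<in> borel_measurable N"
    and fm: "\<And>i. i\<in>I \<Longrightarrow> f i \<in> borel_measurable N"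
    and hm: "\<And>i. i\<in>I \<Longrightarrow> h i \<in> borel_measurable N"
    and ae: "\<And>i. i\<in>I \<Longrightarrow> AE x in N. (\<integral>\<^sup>+j. ennreal (\<alpha> i j x) \<partial>count_space I) \<le> ennreal M"
    and t: "t > 0"
  shows "(\<integral>\<^sup>+i. \<integral>\<^sup>+j. \<integral>\<^sup>+x. ennreal (\<alpha> i j x * f j x * h i x) \<partial>N \<partial>count_space I \<partial>count_space I)
      \<le> ennreal (t/2) * (ennreal M * (\<integral>\<^sup>+i. \<integral>\<^sup>+x. ennreal ((f i x)\<^sup>2) \<partial>N \<partial>count_space I))
        + ennreal (1/(2*t)) * (ennreal M * (\<integral>\<^sup>+i. \<integral>\<^sup>+x. ennreal ((h i x)\<^sup>2) \<partial>N \<partial>count_space I))"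
proof -
  let ?T1 = "\<integral>\<^sup>+i. \<integral>\<^sup>+j. \<integral>\<^sup>+x. ennreal (\<alpha> i j x * (f j x)\<^sup>2) \<partial>N \<partial>count_space I \<partial>count_space I"
  let ?T2 = "\<integral>\<^sup>+i. \<integral>\<^sup>+j. \<integral>\<^sup>+x. ennreal (\<alpha> i j x * (h i x)\<^sup>2) \<partial>N \<partial>count_space I \<partial>count_space I"
  have pt: "ennreal (\<alpha> i j x * f j x * h i x) \<le>
      ennreal (t/2) * ennreal (\<alpha> i j x * (f j x)\<^sup>2) + ennreal (1/(2*t)) * ennreal (\<alpha> i j x * (h i x)\<^sup>2)" for i j x
    using amgm_pt[OF t ann[of i j x], of "f j x" "h i x"] t ann[of i j x]
    by (simp add: ennreal_mult[symmetric] ennreal_plus[symmetric] del: ennreal_plus)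
  have step1: "(\<integral>\<^sup>+i. \<integral>\<^sup>+j. \<integral>\<^sup>+x. ennreal (\<alpha> i j x * f j x * h i x) \<partial>N \<partial>count_space I \<partial>count_space I)
     \<le> (\<integral>\<^sup>+i. \<integral>\<^sup>+j. \<integral>\<^sup>+x. ennreal (t/2) * ennreal (\<alpha> i j x * (f j x)\<^sup>2) + ennreal (1/(2*t)) * ennreal (\<alpha> i j x * (h i x)\<^sup>2) \<partial>N \<partial>count_space I \<partial>count_space I)"
    by (intro nn_integral_mono pt)
  also have "\<dots> = ennreal (t/2) * ?T1 + ennreal (1/(2*t)) * ?T2"
  proof -
    have "(\<integral>\<^sup>+x. ennreal (t/2) * ennreal (\<alpha> i j x * (f j x)\<^sup>2) + ennreal (1/(2*t)) * ennreal (\<alpha> i j x * (h i x)\<^sup>2) \<partial>N)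
       = ennreal (t/2) * (\<integral>\<^sup>+x. ennreal (\<alpha> i j x * (f j x)\<^sup>2) \<partial>N) + ennreal (1/(2*t)) * (\<integral>\<^sup>+x. ennreal (\<alpha> i j x * (h i x)\<^sup>2) \<partial>N)"
      if "i \<in> I" "j \<in> I" for i j
      using am[OF that] fm[OF that(2)] hm[OF that(1)]
      by (subst nn_integral_add) (auto simp: nn_integral_cmult)
    then have "(\<integral>\<^sup>+i. \<integral>\<^sup>+j. \<integral>\<^sup>+x. ennreal (t/2) * ennreal (\<alpha> i j x * (f j x)\<^sup>2) + ennreal (1/(2*t)) * ennreal (\<alpha> i j x * (h i x)\<^sup>2) \<partial>N \<partial>count_space I \<partial>count_space I)
      = (\<integral>\<^sup>+i. \<integral>\<^sup>+j. ennreal (t/2) * (\<integral>\<^sup>+x. ennreal (\<alpha> i j x * (f j x)\<^sup>2) \<partial>N) + ennreal (1/(2*t)) * (\<integral>\<^sup>+x. ennreal (\<alpha> i j x * (h i x)\<^sup>2) \<partial>N) \<partial>count_space I \<partial>count_space I)"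
      by (intro nn_integral_cong) auto
    also have "\<dots> = ennreal (t/2) * ?T1 + ennreal (1/(2*t)) * ?T2"
      by (simp add: nn_integral_add nn_integral_cmult)
    finally show ?thesis .
  qed
  also have "?T1 \<le> ennreal M * (\<integral>\<^sup>+i. \<integral>\<^sup>+x. ennreal ((f i x)\<^sup>2) \<partial>N \<partial>count_space I)"
  proof -
    have "?T1 = (\<integral>\<^sup>+j. \<integral>\<^sup>+i. \<integral>\<^sup>+x. ennreal (\<alpha> i j x * (f j x)\<^sup>2) \<partial>N \<partial>count_space I \<partial>count_space I)"
      using I by (intro nn_integral_count_space_nn_integral) auto
    also have "\<dots> = (\<integral>\<^sup>+j. \<integral>\<^sup>+i. \<integral>\<^sup>+x. ennreal (\<alpha> j i x * (f j x)\<^sup>2) \<partial>N \<partial>count_space I \<partial>count_space I)"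
      using sym by (intro nn_integral_cong) auto
    also have "\<dots> \<le> ennreal M * (\<integral>\<^sup>+i. \<integral>\<^sup>+x. ennreal ((f i x)\<^sup>2) \<partial>N \<partial>count_space I)"
      by (rule Gbound[OF I ann am fm ae])
    finally show ?thesis .
  qed
  also have "?T2 \<le> ennreal M * (\<integral>\<^sup>+i. \<integral>\<^sup>+x. ennreal ((h i x)\<^sup>2) \<partial>N \<partial>count_space I)"
    by (rule Gbound[OF I ann am hm ae])
  finally show ?thesis by (simp add: add_mono mult_left_mono)
qed



lemma opt_t:
  fixes e P Q :: real
  assumes P: "P \<ge> 0" and Q: "Q \<ge> 0" and H: "\<And>t. t > 0 \<Longrightarrow> e \<le> t/2*P + 1/(2*t)*Q"
  shows "e \<le> sqrt P * sqrt Q"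
proof (cases "P > 0 \<and> Q > 0")
  case True
  define t where "t = sqrt Q / sqrt P"
  have tp: "t > 0" using True by (simp add: t_def)
  have "t/2*P = sqrt P * sqrt Q / 2"
    using True by (simp add: t_def field_simps)
  moreover have "1/(2*t)*Q = sqrt P * sqrt Q / 2"
    using True by (simp add: t_def field_simps)
  ultimately show ?thesis using H[OF tp] by simp
next
  case False
  then have "P = 0 \<or> Q = 0" using P Q by auto
  then show ?thesis
  proof
    assume P0: "P = 0"
    show ?thesis
    proof (rule ccontr)
      assume "\<not> ?thesis"
      then have e: "e > 0" using P0 by simp
      define t where "t = (Q+1)/e"
      have tp: "t > 0" using e Q by (simp add: t_def)
      have "1/(2*t)*Q < e" using e Q by (simp add: t_def field_simps add_nonneg_pos)
      then show False using H[OF tp] P0 by simp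
    qed
  next
    assume Q0: "Q = 0"
    show ?thesis
    proof (rule ccontr)
      assume "\<not> ?thesis"
      then have e: "e > 0" using Q0 by simp
      define t where "t = e/(P+1)"
      have tp: "t > 0" using e P by (simp add: t_def)
      have "t/2*P < e" using e P by (simp add: t_def field_simps add_nonneg_pos)
      then show False using H[OF tp] Q0 by simp
    qed
  qed
qed

lemma point_le_count_space:
  fixes f :: "'i \<Rightarrow> ennreal"
  assumes "i \<in> I"
  shows "f i \<le> (\<integral>\<^sup>+x. f x \<partial>count_space I)"
proof -
  have "(\<integral>\<^sup>+x. f x * indicator {i} x \<partial>count_space I) = (\<Sum>x\<in>{i}. f x * indicator {i} x)"
    using assms by (intro nn_integral_count_space') auto
  also have "\<dots> = f i" by simp
  finally have "f i = (\<integral>\<^sup>+x. f x * indicator {i} x \<partial>count_space I)" by simp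
  also have "\<dots> \<le> (\<integral>\<^sup>+x. f x \<partial>count_space I)"
    by (intro nn_integral_mono) (auto simp: indicator_def)
  finally show ?thesis .
qed



theorem lemma3p2:
  fixes D :: "'d::euclidean_space set"
    and a :: "('m::countable \<Rightarrow> nat) \<Rightarrow> ('m \<Rightarrow> nat) \<Rightarrow> 'd \<Rightarrow> real"
    and M :: real
  assumes "0 \<le> M" and "open D" and "connected D" and "D \<noteq> {}"
    and "\<forall>\<nu>\<in>FF. \<forall>\<nu>'\<in>FF. Linf D (a \<nu> \<nu>')"
    and "\<forall>\<nu>\<in>FF. \<forall>\<nu>'\<in>FF. a \<nu> \<nu>' = a \<nu>' \<nu>"
    and "\<forall>\<nu>\<in>FF. AE x in lebesgue_on D.
           (\<Sum>\<^sub>\<infinity>\<nu>'\<in>FF. ennreal \<bar>a \<nu> \<nu>' x\<bar>) \<le> ennreal M"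
  shows "\<forall>uv gv uw gw. inVV D uv gv \<longrightarrow> inVV D uw gw \<longrightarrow>
           \<bar>Bform D a gv gw\<bar> \<le> M * VVnorm D gv * VVnorm D gw"
proof (intro allI impI)
  fix uv uw :: "('m \<Rightarrow> nat) \<Rightarrow> 'd \<Rightarrow> real" and gv gw :: "('m \<Rightarrow> nat) \<Rightarrow> 'd \<Rightarrow> 'd"
  assume vv: "inVV D uv gv" and vw: "inVV D uw gw"
  define L where "L = lebesgue_on D"
  define I where "I = (FF :: ('m \<Rightarrow> nat) set)"
  have I: "countable I" unfolding I_def by (rule countable_FF)
  define \<alpha> where "\<alpha> i j x = \<bar>a i j x\<bar>" for i j x
  define f where "f i x = norm (gv i x)" for i x
  define h where "h i x = norm (gw i x)" for i x
  have am0: "a i j \<in> borel_measurable L" if "i \<in> I" "j \<in> I" for i j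
    using assms(5) that by (auto simp: Linf_def L_def I_def)
  have am: "\<alpha> i j \<in> borel_measurable L" if "i \<in> I" "j \<in> I" for i j
    using am0[OF that] unfolding \<alpha>_def by measurable
  have sv: "sqint D (gv i)" if "i \<in> I" for i
    using vv that by (auto simp: inVV_def H01_def I_def)
  have sw: "sqint D (gw i)" if "i \<in> I" for i
    using vw that by (auto simp: inVV_def H01_def I_def)
  have gvm: "gv i \<in> borel_measurable L" if "i \<in> I" for i
    using sv[OF that] by (simp add: sqint_def L_def)
  have gwm: "gw i \<in> borel_measurable L" if "i \<in> I" for i
    using sw[OF that] by (simp add: sqint_def L_def)
  have fm: "f i \<in> borel_measurable L" if "i \<in> I" for i
    using gvm[OF that] unfolding f_def by measurable
  have hm: "h i \<in> borel_measurable L" if "i \<in> I" for i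
    using gwm[OF that] unfolding h_def by measurable
  have ann: "\<And>i j x. 0 \<le> \<alpha> i j x" by (simp add: \<alpha>_def)
  have sym: "\<alpha> i j = \<alpha> j i" if "i \<in> I" "j \<in> I" for i j
    using assms(6) that by (auto simp: \<alpha>_def I_def)
  have ae: "AE x in L. (\<integral>\<^sup>+j. ennreal (\<alpha> i j x) \<partial>count_space I) \<le> ennreal M" if "i \<in> I" for i
    using assms(7) that unfolding L_def I_def \<alpha>_def
    by (auto elim!: eventually_mono intro!: bridge3 assms(1))
  define Av where "Av = (\<Sum>\<^sub>\<infinity>\<nu>\<in>FF. integral\<^sup>L (lebesgue_on D) (\<lambda>x. (norm (gv \<nu> x))\<^sup>2))"
  define Bw where "Bw = (\<Sum>\<^sub>\<infinity>\<nu>\<in>FF. integral\<^sup>L (lebesgue_on D) (\<lambda>x. (norm (gw \<nu> x))\<^sup>2))"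
  have Av0: "Av \<ge> 0" unfolding Av_def by (intro infsum_nonneg integral_nonneg_AE) auto
  have Bw0: "Bw \<ge> 0" unfolding Bw_def by (intro infsum_nonneg integral_nonneg_AE) auto
  have nA: "(\<integral>\<^sup>+i. \<integral>\<^sup>+x. ennreal ((f i x)\<^sup>2) \<partial>L \<partial>count_space I) = ennreal Av"
  proof -
    have "(\<integral>\<^sup>+i. \<integral>\<^sup>+x. ennreal ((f i x)\<^sup>2) \<partial>L \<partial>count_space I)
        = (\<integral>\<^sup>+i. ennreal (integral\<^sup>L (lebesgue_on D) (\<lambda>x. (norm (gv i x))\<^sup>2)) \<partial>count_space I)"
      using sv unfolding f_def L_def sqint_def
      by (intro nn_integral_cong nn_integral_eq_integral) auto
    also have "\<dots> = ennreal Av"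
      unfolding Av_def I_def using vv unfolding inVV_def
      by (intro bridge1) (auto intro!: integral_nonneg_AE)
    finally show ?thesis .
  qed
  have nB: "(\<integral>\<^sup>+i. \<integral>\<^sup>+x. ennreal ((h i x)\<^sup>2) \<partial>L \<partial>count_space I) = ennreal Bw"
  proof -
    have "(\<integral>\<^sup>+i. \<integral>\<^sup>+x. ennreal ((h i x)\<^sup>2) \<partial>L \<partial>count_space I)
        = (\<integral>\<^sup>+i. ennreal (integral\<^sup>L (lebesgue_on D) (\<lambda>x. (norm (gw i x))\<^sup>2)) \<partial>count_space I)"
      using sw unfolding h_def L_def sqint_def
      by (intro nn_integral_cong nn_integral_eq_integral) auto
    also have "\<dots> = ennreal Bw"
      unfolding Bw_def I_def using vw unfolding inVV_def
      by (intro bridge1) (auto intro!: integral_nonneg_AE)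
    finally show ?thesis .
  qed
  define c where "c i j = integral\<^sup>L L (\<lambda>x. a i j x * (gv j x \<bullet> gw i x))" for i j
  define E where "E = (\<integral>\<^sup>+i. \<integral>\<^sup>+j. ennreal \<bar>c i j\<bar> \<partial>count_space I \<partial>count_space I)"
  have E1: "E \<le> (\<integral>\<^sup>+i. \<integral>\<^sup>+j. \<integral>\<^sup>+x. ennreal (\<alpha> i j x * f j x * h i x) \<partial>L \<partial>count_space I \<partial>count_space I)"
    unfolding E_def c_def
  proof (intro nn_integral_mono order.trans[OF ennreal_abs_integral_le])
    fix i j x
    have "\<bar>a i j x * (gv j x \<bullet> gw i x)\<bar> \<le> \<alpha> i j x * f j x * h i x"
      unfolding \<alpha>_def f_def h_def abs_mult mult.assoc
      by (intro mult_left_mono Cauchy_Schwarz_ineq2) auto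
    then show "ennreal \<bar>a i j x * (gv j x \<bullet> gw i x)\<bar> \<le> ennreal (\<alpha> i j x * f j x * h i x)"
      by (rule ennreal_leI)
  qed
  have Et: "enn2real E \<le> t/2 * (M*Av) + 1/(2*t) * (M*Bw)" and Efin: "E \<noteq> \<infinity>" if t: "t > 0" for t
  proof -
    have "E \<le> ennreal (t/2) * (ennreal M * ennreal Av) + ennreal (1/(2*t)) * (ennreal M * ennreal Bw)"
      using order.trans[OF E1 mainE[OF I ann sym am fm hm ae t]] nA nB by simp
    also have "\<dots> = ennreal (t/2 * (M*Av) + 1/(2*t) * (M*Bw))"
    proof -
      have e1: "ennreal (t/2) * (ennreal M * ennreal Av) = ennreal (t/2 * (M*Av))"
      proof -
        have "ennreal (t/2 * (M*Av)) = ennreal (t/2) * ennreal (M*Av)"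
          by (rule ennreal_mult) (use t assms(1) Av0 in auto)
        moreover have "ennreal (M*Av) = ennreal M * ennreal Av"
          by (rule ennreal_mult) (use t assms(1) Av0 in auto)
        ultimately show ?thesis by simp
      qed
      have e2: "ennreal (1/(2*t)) * (ennreal M * ennreal Bw) = ennreal (1/(2*t) * (M*Bw))"
      proof -
        have "ennreal (1/(2*t) * (M*Bw)) = ennreal (1/(2*t)) * ennreal (M*Bw)"
          by (rule ennreal_mult) (use t assms(1) Bw0 in auto)
        moreover have "ennreal (M*Bw) = ennreal M * ennreal Bw"
          by (rule ennreal_mult) (use t assms(1) Bw0 in auto)
        ultimately show ?thesis by simp
      qed
      show ?thesis unfolding e1 e2
        using t assms(1) Av0 Bw0 by (intro ennreal_plus[symmetric]) auto
    qed
    finally have *: "E \<le> ennreal (t/2 * (M*Av) + 1/(2*t) * (M*Bw))" .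
    then show "E \<noteq> \<infinity>" using neq_top_trans[OF ennreal_neq_top *] by simp
    show "enn2real E \<le> t/2 * (M*Av) + 1/(2*t) * (M*Bw)"
      using * t assms(1) Av0 Bw0 by (simp add: enn2real_leI)
  qed
  have Efin: "E \<noteq> \<infinity>" using Efin[of 1] by simp
  have Ereal: "enn2real E \<le> sqrt (M*Av) * sqrt (M*Bw)"
    by (rule opt_t) (use Et assms(1) Av0 Bw0 in auto)
  have Ebound: "E \<le> ennreal (M * VVnorm D gv * VVnorm D gw)"
  proof -
    have "sqrt (M*Av) * sqrt (M*Bw) = M * VVnorm D gv * VVnorm D gw"
      using assms(1) unfolding VVnorm_def Av_def[symmetric] Bw_def[symmetric]
      by (simp add: real_sqrt_mult)
    moreover have "E = ennreal (enn2real E)"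
      using Efin by (simp add: top.not_eq_extremum)
    ultimately show ?thesis using Ereal
      by (metis ennreal_leI)
  qed
  define b where "b i = infsum (c i) I" for i
  have bB: "ennreal \<bar>b i\<bar> \<le> (\<integral>\<^sup>+j. ennreal \<bar>c i j\<bar> \<partial>count_space I)" if i: "i \<in> I" for i
  proof -
    have "(\<integral>\<^sup>+j. ennreal \<bar>c i j\<bar> \<partial>count_space I) \<le> E"
      unfolding E_def by (rule point_le_count_space[OF i])
    then have fin: "(\<integral>\<^sup>+j. ennreal \<bar>c i j\<bar> \<partial>count_space I) \<noteq> \<infinity>" using Efin
      using neq_top_trans[OF Efin[unfolded infinity_ennreal_def]] by (simp add: infinity_ennreal_def)
    have s: "(\<lambda>j. norm (c i j)) summable_on I" using fin by (intro bridge2) simp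
    have "\<bar>b i\<bar> \<le> infsum (\<lambda>j. norm (c i j)) I"
      unfolding b_def using norm_infsum_bound[OF s] by simp
    then have "ennreal \<bar>b i\<bar> \<le> ennreal (infsum (\<lambda>j. norm (c i j)) I)" by (rule ennreal_leI)
    also have "\<dots> = (\<integral>\<^sup>+j. ennreal \<bar>c i j\<bar> \<partial>count_space I)"
      using bridge1[OF s] by simp
    finally show ?thesis .
  qed
  have bE: "(\<integral>\<^sup>+i. ennreal \<bar>b i\<bar> \<partial>count_space I) \<le> E"
    unfolding E_def using bB by (intro nn_integral_mono) auto
  then have "(\<integral>\<^sup>+i. ennreal \<bar>b i\<bar> \<partial>count_space I) \<noteq> \<infinity>"
    using neq_top_trans[OF Efin[unfolded infinity_ennreal_def]] by (simp add: infinity_ennreal_def)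
  then have bfin: "(\<integral>\<^sup>+i. ennreal (norm (b i)) \<partial>count_space I) \<noteq> \<infinity>"
    by simp
  have s: "(\<lambda>i. norm (b i)) summable_on I" using bfin by (rule bridge2)
  have Bf: "Bform D a gv gw = infsum b I"
    unfolding Bform_def b_def c_def I_def L_def ..
  have "\<bar>infsum b I\<bar> \<le> infsum (\<lambda>i. norm (b i)) I"
    using norm_infsum_bound[OF s] by simp
  moreover have "ennreal (infsum (\<lambda>i. norm (b i)) I) \<le> ennreal (M * VVnorm D gv * VVnorm D gw)"
    using bridge1[OF s] bE Ebound by simp
  moreover have "M * VVnorm D gv * VVnorm D gw \<ge> 0"
    using assms(1) Av0 Bw0 unfolding VVnorm_def Av_def[symmetric] Bw_def[symmetric] by simp
  ultimately show "\<bar>Bform D a gv gw\<bar> \<le> M * VVnorm D gv * VVnorm D gw"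
    unfolding Bf by (meson ennreal_le_iff order.trans)
qed


end
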